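(* Let $r_1,r_2>0$ and $g,h\in\Gamma_0(\mathbb{R}^n)$. Then $e_{r_1}g+e_{r_2}h=e_{r_1+r_2}f$ for some $f\in\Gamma_0(\mathbb{R}^n)$; specifically, $$f(x)=\sup_{v\in\mathbb{R}^n}\Big\{\big[e_{r_1}g(x+v)-r_1q(v)\big]+\big[e_{r_2}h(x+v)-r_2q(v)\big]\Big\}.$$
   Context: $\Gamma_0(\mathbb{R}^n)$ is the set of proper convex lsc functions on $\mathbb{R}^n$; $e_rg(x)=\inf_y\{g(y)+\frac r2\|y-x\|^2\}$; $q=\frac12\|\cdot\|^2$. *)

theory Defs
  imports "HOL-Analysis.Analysis"
begin

definition proper_fun :: "('a \<Rightarrow> ereal) \<Rightarrow> bool" where
  "proper_fun f \<longleftrightarrow> (\<forall>x. f x \<noteq> -\<infinity>) \<and> (\<exists>x. f x \<noteq> \<infinity>)"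

definition epigraph_e :: "('a \<Rightarrow> ereal) \<Rightarrow> ('a \<times> real) set" where
  "epigraph_e f = {(x, t). f x \<le> ereal t}"

definition convex_fun :: "('a::real_vector \<Rightarrow> ereal) \<Rightarrow> bool" where
  "convex_fun f \<longleftrightarrow> convex (epigraph_e f)"

definition lsc_fun :: "('a::topological_space \<Rightarrow> ereal) \<Rightarrow> bool" where
  "lsc_fun f \<longleftrightarrow> (\<forall>x. f x \<le> Liminf (at x) f)"

definition Gamma0 :: "('a::euclidean_space \<Rightarrow> ereal) set" where
  "Gamma0 = {f. proper_fun f \<and> convex_fun f \<and> lsc_fun f}"

definition q :: "'a::real_normed_vector \<Rightarrow> real" where
  "q x = (1/2) * (norm x)^2"

definition moreau_env :: "real \<Rightarrow> ('a::real_normed_vector \<Rightarrow> ereal) \<Rightarrow> 'a \<Rightarrow> ereal" where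
  "moreau_env r g x = (INF y. g y + ereal (r / 2 * (norm (y - x))^2))"

end

theory Submission
  imports Defs
begin

lemma conv_fin:
  assumes "convex_fun g" "g x \<le> ereal a" "g y \<le> ereal b" "0 \<le> u" "0 \<le> v" "u + v = 1"
  shows "g (u *\<^sub>R x + v *\<^sub>R y) \<le> ereal (u * a + v * b)"
proof -
  have "(x,a) \<in> epigraph_e g" "(y,b) \<in> epigraph_e g" using assms by (auto simp: epigraph_e_def)
  hence "u *\<^sub>R (x,a) + v *\<^sub>R (y,b) \<in> epigraph_e g"
    using assms convexD[of "epigraph_e g"] unfolding convex_fun_def by blast
  thus ?thesis by (simp add: epigraph_e_def)
qed

lemma lower_linear:
  fixes g :: "'a::euclidean_space \<Rightarrow> ereal"
  assumes "g \<in> Gamma0"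
  shows "\<exists>A B y0. B \<ge> 0 \<and> (\<forall>y. ereal (A - B * norm (y - y0)) \<le> g y)"
proof -
  have pr: "proper_fun g" and cv: "convex_fun g" and ls: "lsc_fun g"
    using assms by (auto simp: Gamma0_def)
  obtain y0 where "g y0 \<noteq> \<infinity>" using pr by (auto simp: proper_fun_def)
  moreover have "g y0 \<noteq> -\<infinity>" using pr by (auto simp: proper_fun_def)
  ultimately obtain a where ga: "g y0 = ereal a" by (cases "g y0") auto
  have "ereal (a - 1) < g y0" using ga by simp
  also have "g y0 \<le> Liminf (at y0) g" using ls unfolding lsc_fun_def by blast
  finally have "ereal (a - 1) < Liminf (at y0) g" .
  hence "eventually (\<lambda>y. ereal (a - 1) < g y) (at y0)" by (rule less_LiminfD)
  then obtain d where d: "d > 0" and dd: "\<And>y. y \<noteq> y0 \<Longrightarrow> dist y y0 < d \<Longrightarrow> ereal (a - 1) < g y"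
    unfolding eventually_at by auto
  have loc: "ereal (a - 1) \<le> g y" if "dist y y0 < d" for y
    using dd[of y] that ga by (cases "y = y0") (auto intro: less_imp_le)
  define \<rho> where "\<rho> = d / 2"
  have rho: "\<rho> > 0" "\<rho> < d" using d by (auto simp: \<rho>_def)
  define B where "B = 1 / \<rho>"
  show ?thesis
  proof (intro exI conjI allI)
    show "B \<ge> 0" using rho by (simp add: B_def)
    fix y
    show "ereal (a - 1 - B * norm (y - y0)) \<le> g y"
    proof (cases "norm (y - y0) < \<rho>")
      case True
      hence "ereal (a - 1) \<le> g y" using loc rho by (simp add: dist_norm)
      moreover have "B * norm (y - y0) \<ge> 0" using rho by (simp add: B_def)
      ultimately have "ereal (a - 1 - B * norm (y - y0)) \<le> ereal (a - 1)" by simp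
      thus ?thesis using \<open>ereal (a - 1) \<le> g y\<close> by (rule order_trans)
    next
      case False
      show ?thesis
      proof (cases "g y = \<infinity>")
        case True thus ?thesis by simp
      next
        case False
        with pr obtain b where gb: "g y = ereal b" by (cases "g y") (auto simp: proper_fun_def)
        define n where "n = norm (y - y0)"
        have n: "n \<ge> \<rho>" using \<open>\<not> norm (y - y0) < \<rho>\<close> by (simp add: n_def)
        define t where "t = \<rho> / n"
        have t: "0 < t" "t \<le> 1" using n rho by (auto simp: t_def)
        have "g ((1 - t) *\<^sub>R y0 + t *\<^sub>R y) \<le> ereal ((1 - t) * a + t * b)"
          using conv_fin[OF cv, of y0 a y b "1-t" t] ga gb t by simp
        moreover have "dist ((1 - t) *\<^sub>R y0 + t *\<^sub>R y) y0 < d"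
        proof -
          have "(1 - t) *\<^sub>R y0 + t *\<^sub>R y - y0 = t *\<^sub>R (y - y0)" by (simp add: algebra_simps)
          hence "dist ((1 - t) *\<^sub>R y0 + t *\<^sub>R y) y0 = t * n" using t by (simp add: dist_norm n_def)
          also have "\<dots> = \<rho>" using n rho by (simp add: t_def)
          finally show ?thesis using rho by simp
        qed
        ultimately have "ereal (a - 1) \<le> ereal ((1 - t) * a + t * b)" using loc order_trans by blast
        hence "a - 1 \<le> (1 - t) * a + t * b" by simp
        hence "t * (a - b) \<le> 1" by (simp add: algebra_simps)
        hence "a - b \<le> 1 / t" using t by (simp add: field_simps mult.commute)
        hence "a - b \<le> n / \<rho>" using t n rho by (simp add: t_def)
        hence "a - 1 - B * n \<le> b" using rho n by (simp add: B_def)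
        thus ?thesis using gb n_def by simp
      qed
    qed
  qed
qed

lemma env_lower:
  fixes g :: "'a::euclidean_space \<Rightarrow> ereal"
  assumes "g \<in> Gamma0" "r > 0"
  shows "\<exists>c. \<forall>y. ereal c \<le> g y + ereal (r / 2 * (norm (y - x))^2)"
proof -
  obtain A B y0 where B: "B \<ge> 0" and low: "\<And>y. ereal (A - B * norm (y - y0)) \<le> g y"
    using lower_linear[OF assms(1)] by blast
  show ?thesis
  proof (intro exI allI)
    fix y
    define s where "s = norm (y - x)"
    have "norm (y - y0) \<le> s + norm (x - y0)"
      using norm_triangle_ineq[of "y - x" "x - y0"] by (simp add: s_def)
    hence 1: "B * norm (y - y0) \<le> B * s + B * norm (x - y0)" using B
      by (metis distrib_left mult_left_mono)
    have "0 \<le> (r * s - B)^2" by simp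
    hence "2 * r * (B * s) \<le> r * r * s^2 + B^2" by (simp add: power2_eq_square algebra_simps)
    hence 2: "B * s \<le> r / 2 * s^2 + B^2 / (2 * r)" using assms(2) by (simp add: field_simps power2_eq_square)
    have "A - B * norm (x - y0) - B^2 / (2 * r) \<le> A - B * norm (y - y0) + r / 2 * s^2"
      using 1 2 by linarith
    hence "ereal (A - B * norm (x - y0) - B^2 / (2 * r)) \<le> ereal (A - B * norm (y - y0)) + ereal (r / 2 * s^2)"
      by simp
    also have "\<dots> \<le> g y + ereal (r / 2 * s^2)" using low[of y] by (rule add_right_mono)
    finally show "ereal (A - B * norm (x - y0) - B^2 / (2 * r)) \<le> g y + ereal (r / 2 * (norm (y - x))^2)"
      by (simp add: s_def)
  qed
qed

lemma env_finite:
  fixes g :: "'a::euclidean_space \<Rightarrow> ereal"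
  assumes "g \<in> Gamma0" "r > 0"
  shows "moreau_env r g x = ereal (real_of_ereal (moreau_env r g x))"
proof -
  obtain c where c: "\<And>y. ereal c \<le> g y + ereal (r / 2 * (norm (y - x))^2)"
    using env_lower[OF assms] by blast
  have "ereal c \<le> moreau_env r g x" unfolding moreau_env_def by (rule INF_greatest) (rule c)
  moreover obtain y0 where "g y0 \<noteq> \<infinity>" using assms(1) by (auto simp: Gamma0_def proper_fun_def)
  moreover have "moreau_env r g x \<le> g y0 + ereal (r / 2 * (norm (y0 - x))^2)"
    unfolding moreau_env_def by (rule INF_lower) simp
  ultimately show ?thesis by (cases "moreau_env r g x") auto
qed

lemma sq_conv:
  fixes a b :: "'a::real_normed_vector"
  assumes "0 \<le> u" "0 \<le> v" "u + v = 1"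
  shows "(norm (u *\<^sub>R a + v *\<^sub>R b))^2 \<le> u * (norm a)^2 + v * (norm b)^2"
proof -
  have "norm (u *\<^sub>R a + v *\<^sub>R b) \<le> u * norm a + v * norm b"
    using norm_triangle_ineq[of "u *\<^sub>R a" "v *\<^sub>R b"] assms by simp
  hence "(norm (u *\<^sub>R a + v *\<^sub>R b))^2 \<le> (u * norm a + v * norm b)^2"
    by (simp add: power_mono)
  also have "\<dots> = u * (norm a)^2 + v * (norm b)^2 - u * v * (norm a - norm b)^2"
  proof -
    have "v = 1 - u" using assms(3) by simp
    show ?thesis unfolding \<open>v = 1 - u\<close> by (simp add: power2_eq_square algebra_simps)
  qed
  also have "\<dots> \<le> u * (norm a)^2 + v * (norm b)^2" using assms by simp
  finally show ?thesis .
qed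

lemma env_approx:
  fixes g :: "'a::euclidean_space \<Rightarrow> ereal"
  assumes "g \<in> Gamma0" "r > 0" "e > 0"
  shows "\<exists>y b. g y = ereal b \<and> b + r / 2 * (norm (y - x))^2 < real_of_ereal (moreau_env r g x) + e"
proof -
  obtain Ex where Ex: "moreau_env r g x = ereal Ex" using env_finite[OF assms(1,2), of x] by blast
  have "moreau_env r g x < ereal (real_of_ereal (moreau_env r g x) + e)"
    using assms(3) by (simp add: Ex)
  then obtain y where y: "g y + ereal (r / 2 * (norm (y - x))^2) < ereal (real_of_ereal (moreau_env r g x) + e)"
    unfolding moreau_env_def by (auto simp: INF_less_iff)
  have "g y \<noteq> \<infinity>" using y by auto
  moreover have "g y \<noteq> -\<infinity>" using assms(1) by (auto simp: Gamma0_def proper_fun_def)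
  ultimately obtain b where "g y = ereal b" by (cases "g y") auto
  thus ?thesis using y by auto
qed

lemma env_convex:
  fixes g :: "'a::euclidean_space \<Rightarrow> ereal"
  assumes "g \<in> Gamma0" "r > 0"
  shows "convex_on UNIV (\<lambda>x. real_of_ereal (moreau_env r g x))"
  unfolding convex_on_def
proof (intro conjI ballI allI impI)
  show "convex (UNIV :: 'a set)" by simp
  fix x1 x2 :: 'a and u v :: real
  assume uv: "0 \<le> u" "0 \<le> v" "u + v = 1"
  let ?E = "\<lambda>x. real_of_ereal (moreau_env r g x)"
  show "?E (u *\<^sub>R x1 + v *\<^sub>R x2) \<le> u * ?E x1 + v * ?E x2"
  proof (rule field_le_epsilon)
    fix e :: real assume e: "e > 0"
    obtain y1 b1 where y1: "g y1 = ereal b1" "b1 + r / 2 * (norm (y1 - x1))^2 < ?E x1 + e"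
      using env_approx[OF assms e] by blast
    obtain y2 b2 where y2: "g y2 = ereal b2" "b2 + r / 2 * (norm (y2 - x2))^2 < ?E x2 + e"
      using env_approx[OF assms e] by blast
    define yz where "yz = u *\<^sub>R y1 + v *\<^sub>R y2"
    define z where "z = u *\<^sub>R x1 + v *\<^sub>R x2"
    have cv: "convex_fun g" using assms(1) by (simp add: Gamma0_def)
    have g1: "g yz \<le> ereal (u * b1 + v * b2)"
      unfolding yz_def using conv_fin[OF cv, of y1 b1 y2 b2 u v] y1 y2 uv by simp
    have "yz - z = u *\<^sub>R (y1 - x1) + v *\<^sub>R (y2 - x2)" by (simp add: yz_def z_def algebra_simps)
    hence n: "(norm (yz - z))^2 \<le> u * (norm (y1 - x1))^2 + v * (norm (y2 - x2))^2"
      using sq_conv[OF uv] by simp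
    have "moreau_env r g z \<le> g yz + ereal (r / 2 * (norm (yz - z))^2)"
      unfolding moreau_env_def by (rule INF_lower) simp
    also have "\<dots> \<le> ereal (u * b1 + v * b2) + ereal (r / 2 * (norm (yz - z))^2)"
      using g1 by (rule add_right_mono)
    finally have le: "moreau_env r g z \<le> ereal (u * b1 + v * b2 + r / 2 * (norm (yz - z))^2)" by simp
    obtain Ez where Ez: "moreau_env r g z = ereal Ez" using env_finite[OF assms, of z] by blast
    have "?E z \<le> u * b1 + v * b2 + r / 2 * (norm (yz - z))^2" using le by (simp add: Ez)
    also have "\<dots> \<le> u * b1 + v * b2 + r / 2 * (u * (norm (y1 - x1))^2 + v * (norm (y2 - x2))^2)"
      using n assms(2) by simp
    also have "\<dots> = u * (b1 + r / 2 * (norm (y1 - x1))^2) + v * (b2 + r / 2 * (norm (y2 - x2))^2)"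
      by (simp add: algebra_simps)
    also have "\<dots> \<le> u * (?E x1 + e) + v * (?E x2 + e)"
      using mult_left_mono[OF less_imp_le[OF y1(2)] uv(1)] mult_left_mono[OF less_imp_le[OF y2(2)] uv(2)]
      by (rule add_mono)
    also have "\<dots> = u * ?E x1 + v * ?E x2 + e * (u + v)" by (simp add: algebra_simps)
    also have "\<dots> = u * ?E x1 + v * ?E x2 + e" using uv by simp
    finally show "?E (u *\<^sub>R x1 + v *\<^sub>R x2) \<le> u * ?E x1 + v * ?E x2 + e" by (simp add: z_def)
  qed
qed

lemma env_cont:
  fixes g :: "'a::euclidean_space \<Rightarrow> ereal"
  assumes "g \<in> Gamma0" "r > 0"
  shows "continuous_on UNIV (\<lambda>x. real_of_ereal (moreau_env r g x))"
  by (rule convex_on_continuous[OF _ env_convex[OF assms]]) simp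

lemma quad_ident:
  fixes y1 y2 z y :: "'a::real_inner"
  assumes "r1 *\<^sub>R y1 + r2 *\<^sub>R y2 = (r1 + r2) *\<^sub>R y"
  shows "r1 * (norm (y1 - z))^2 + r2 * (norm (y2 - z))^2 - (r1 + r2) * (norm (z - y))^2
       = r1 * (norm y1)^2 + r2 * (norm y2)^2 - (r1 + r2) * (norm y)^2"
proof -
  have ip: "r1 * inner y1 z + r2 * inner y2 z = (r1 + r2) * inner y z"
  proof -
    have "inner (r1 *\<^sub>R y1 + r2 *\<^sub>R y2) z = inner ((r1 + r2) *\<^sub>R y) z" using assms by simp
    thus ?thesis by (simp only: inner_add_left inner_scaleR_left)
  qed
  have n: "\<And>a b :: 'a. (norm (a - b))^2 = (norm a)^2 - 2 * inner a b + (norm b)^2"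
    by (simp add: power2_norm_eq_inner inner_diff_left inner_diff_right inner_commute)
  show ?thesis unfolding n using ip by (simp add: inner_commute algebra_simps)
qed

lemma convex_funI:
  assumes "\<And>x1 s1 x2 s2 u v. f x1 \<le> ereal s1 \<Longrightarrow> f x2 \<le> ereal s2 \<Longrightarrow> 0 \<le> u \<Longrightarrow> 0 \<le> v \<Longrightarrow> u + v = 1
     \<Longrightarrow> f (u *\<^sub>R x1 + v *\<^sub>R x2) \<le> ereal (u * s1 + v * s2)"
  shows "convex_fun f"
  unfolding convex_fun_def convex_def epigraph_e_def using assms by auto

theorem corollary4p41:
  fixes g h :: "'a::euclidean_space \<Rightarrow> ereal" and r1 r2 :: real
  assumes "r1 > 0" and "r2 > 0" and "g \<in> Gamma0" and "h \<in> Gamma0"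
  defines "f \<equiv> (\<lambda>x. SUP v. (moreau_env r1 g (x + v) - ereal (r1 * q v))
                          + (moreau_env r2 h (x + v) - ereal (r2 * q v)))"
  shows "f \<in> Gamma0 \<and> (\<forall>x. moreau_env r1 g x + moreau_env r2 h x = moreau_env (r1 + r2) f x)"
proof -
  define E1 where "E1 = (\<lambda>x. real_of_ereal (moreau_env r1 g x))"
  define E2 where "E2 = (\<lambda>x. real_of_ereal (moreau_env r2 h x))"
  define \<Phi> where "\<Phi> = (\<lambda>x. E1 x + E2 x)"
  define r where "r = r1 + r2"
  have r: "r > 0" using assms by (simp add: r_def)
  have fin1: "\<And>x. moreau_env r1 g x = ereal (E1 x)"
    unfolding E1_def using env_finite[OF assms(3,1)] by blast
  have fin2: "\<And>x. moreau_env r2 h x = ereal (E2 x)"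
    unfolding E2_def using env_finite[OF assms(4,2)] by blast
  have f_eq: "f x = (SUP v. ereal (\<Phi> (x + v) - r * q v))" for x
    unfolding f_def \<Phi>_def r_def fin1 fin2 by (simp add: algebra_simps)
  have K1: "ereal (\<Phi> (x + v) - r * q v) \<le> f x" for x v
    unfolding f_eq by (rule SUP_upper) simp
  have up1: "E1 z \<le> b + r1 / 2 * (norm (y - z))^2" if "g y = ereal b" for y b z
  proof -
    have "moreau_env r1 g z \<le> g y + ereal (r1 / 2 * (norm (y - z))^2)"
      unfolding moreau_env_def by (rule INF_lower) simp
    thus ?thesis using that by (simp add: fin1)
  qed
  have up2: "E2 z \<le> b + r2 / 2 * (norm (y - z))^2" if "h y = ereal b" for y b z
  proof -
    have "moreau_env r2 h z \<le> h y + ereal (r2 / 2 * (norm (y - z))^2)"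
      unfolding moreau_env_def by (rule INF_lower) simp
    thus ?thesis using that by (simp add: fin2)
  qed
  have K2: "\<exists>y. f y \<le> ereal (\<Phi> x - r * q (x - y) + 2 * e)" if e: "e > 0" for x e
  proof -
    obtain y1 b1 where y1: "g y1 = ereal b1" "b1 + r1 / 2 * (norm (y1 - x))^2 < E1 x + e"
      using env_approx[OF assms(3,1) e] unfolding E1_def by blast
    obtain y2 b2 where y2: "h y2 = ereal b2" "b2 + r2 / 2 * (norm (y2 - x))^2 < E2 x + e"
      using env_approx[OF assms(4,2) e] unfolding E2_def by blast
    define y where "y = (1 / r) *\<^sub>R (r1 *\<^sub>R y1 + r2 *\<^sub>R y2)"
    have ry: "r1 *\<^sub>R y1 + r2 *\<^sub>R y2 = (r1 + r2) *\<^sub>R y" using r by (simp add: y_def r_def)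
    show ?thesis
    proof (intro exI)
      show "f y \<le> ereal (\<Phi> x - r * q (x - y) + 2 * e)"
        unfolding f_eq
      proof (rule SUP_least)
        fix w assume "w \<in> (UNIV :: 'a set)"
        define z where "z = y + w"
        have "\<Phi> z - r * q w \<le> b1 + r1 / 2 * (norm (y1 - z))^2 + (b2 + r2 / 2 * (norm (y2 - z))^2) - r * q w"
          using up1[OF y1(1), of z] up2[OF y2(1), of z] by (simp add: \<Phi>_def)
        also have "r * q w = r / 2 * (norm (z - y))^2" by (simp add: q_def z_def)
        also have "b1 + r1 / 2 * (norm (y1 - z))^2 + (b2 + r2 / 2 * (norm (y2 - z))^2) - r / 2 * (norm (z - y))^2
           = b1 + b2 + (r1 * (norm (y1 - z))^2 + r2 * (norm (y2 - z))^2 - (r1 + r2) * (norm (z - y))^2) / 2"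
          by (simp add: r_def field_simps)
        also have "\<dots> = b1 + b2 + (r1 * (norm (y1 - x))^2 + r2 * (norm (y2 - x))^2 - (r1 + r2) * (norm (x - y))^2) / 2"
          unfolding quad_ident[OF ry] ..
        also have "\<dots> = (b1 + r1 / 2 * (norm (y1 - x))^2) + (b2 + r2 / 2 * (norm (y2 - x))^2) - r * q (x - y)"
          by (simp add: r_def q_def field_simps)
        also have "\<dots> \<le> \<Phi> x - r * q (x - y) + 2 * e" using y1(2) y2(2) by (simp add: \<Phi>_def)
        finally show "ereal (\<Phi> (y + w) - r * q w) \<le> ereal (\<Phi> x - r * q (x - y) + 2 * e)"
          by (simp add: z_def q_def)
      qed
    qed
  qed
  have env: "moreau_env r f x = ereal (\<Phi> x)" for x
  proof (rule antisym)
    show "ereal (\<Phi> x) \<le> moreau_env r f x"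
      unfolding moreau_env_def
    proof (rule INF_greatest)
      fix y assume "y \<in> (UNIV :: 'a set)"
      have "ereal (\<Phi> (y + (x - y)) - r * q (x - y)) \<le> f y" by (rule K1)
      hence le: "ereal (\<Phi> x - r * q (x - y)) + ereal (r / 2 * (norm (y - x))^2) \<le> f y + ereal (r / 2 * (norm (y - x))^2)"
        by (intro add_right_mono) simp
      have "ereal (\<Phi> x) = ereal (\<Phi> x - r * q (x - y)) + ereal (r / 2 * (norm (y - x))^2)"
        by (simp add: q_def norm_minus_commute)
      also note le
      finally show "ereal (\<Phi> x) \<le> f y + ereal (r / 2 * (norm (y - x))^2)" .
    qed
  next
    show "moreau_env r f x \<le> ereal (\<Phi> x)"
    proof (rule ereal_le_epsilon2)
      fix e :: real assume e: "e > 0"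
      then obtain y where y: "f y \<le> ereal (\<Phi> x - r * q (x - y) + 2 * (e / 2))" using K2[of "e / 2" x] by auto
      have "moreau_env r f x \<le> f y + ereal (r / 2 * (norm (y - x))^2)"
        unfolding moreau_env_def by (rule INF_lower) simp
      also have "\<dots> \<le> ereal (\<Phi> x - r * q (x - y) + 2 * (e / 2)) + ereal (r / 2 * (norm (y - x))^2)"
        using y by (rule add_right_mono)
      also have "\<dots> = ereal (\<Phi> x) + ereal e" by (simp add: q_def norm_minus_commute)
      finally show "moreau_env r f x \<le> ereal (\<Phi> x) + ereal e" .
    qed
  qed
  have Phi_conv: "convex_on UNIV \<Phi>"
    unfolding \<Phi>_def E1_def E2_def
    by (rule convex_on_add[OF env_convex[OF assms(3,1)] env_convex[OF assms(4,2)]])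
  have Phi_cont: "continuous_on UNIV \<Phi>"
    unfolding \<Phi>_def E1_def E2_def
    by (intro continuous_on_add env_cont[OF assms(3,1)] env_cont[OF assms(4,2)])
  have proper: "proper_fun f"
    unfolding proper_fun_def
  proof
    show "\<forall>x. f x \<noteq> - \<infinity>"
    proof
      fix x show "f x \<noteq> -\<infinity>" using K1[of x 0] by auto
    qed
    obtain y where "f y \<le> ereal (\<Phi> 0 - r * q (0 - y) + 2 * 1)" using K2[of 1 0] by auto
    hence "f y \<noteq> \<infinity>" by auto
    thus "\<exists>x. f x \<noteq> \<infinity>" by blast
  qed
  have convex: "convex_fun f"
  proof (rule convex_funI)
    fix x1 x2 :: 'a and s1 s2 u v :: real
    assume s: "f x1 \<le> ereal s1" "f x2 \<le> ereal s2" and uv: "0 \<le> u" "0 \<le> v" "u + v = 1"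
    show "f (u *\<^sub>R x1 + v *\<^sub>R x2) \<le> ereal (u * s1 + v * s2)"
      unfolding f_eq
    proof (rule SUP_least)
      fix w :: 'a assume "w \<in> UNIV"
      have a1: "\<Phi> (x1 + w) - r * q w \<le> s1" using order_trans[OF K1[of x1 w] s(1)] by simp
      have a2: "\<Phi> (x2 + w) - r * q w \<le> s2" using order_trans[OF K1[of x2 w] s(2)] by simp
      have "u *\<^sub>R x1 + v *\<^sub>R x2 + w = u *\<^sub>R (x1 + w) + v *\<^sub>R (x2 + w)"
        using uv(3) by (simp add: algebra_simps flip: scaleR_add_left)
      hence "\<Phi> (u *\<^sub>R x1 + v *\<^sub>R x2 + w) \<le> u * \<Phi> (x1 + w) + v * \<Phi> (x2 + w)"
        using Phi_conv uv unfolding convex_on_def by simp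
      hence "\<Phi> (u *\<^sub>R x1 + v *\<^sub>R x2 + w) - r * q w
          \<le> u * (\<Phi> (x1 + w) - r * q w) + v * (\<Phi> (x2 + w) - r * q w)"
      proof -
        have "u * (\<Phi> (x1 + w) - r * q w) + v * (\<Phi> (x2 + w) - r * q w)
            = u * \<Phi> (x1 + w) + v * \<Phi> (x2 + w) - (u + v) * (r * q w)" by (simp add: algebra_simps)
        thus ?thesis using uv(3) \<open>\<Phi> (u *\<^sub>R x1 + v *\<^sub>R x2 + w) \<le> u * \<Phi> (x1 + w) + v * \<Phi> (x2 + w)\<close> by simp
      qed
      also have "\<dots> \<le> u * s1 + v * s2"
        using mult_left_mono[OF a1 uv(1)] mult_left_mono[OF a2 uv(2)] by (rule add_mono)
      finally show "ereal (\<Phi> (u *\<^sub>R x1 + v *\<^sub>R x2 + w) - r * q w) \<le> ereal (u * s1 + v * s2)" by simp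
    qed
  qed
  have lsc: "lsc_fun f"
    unfolding lsc_fun_def
  proof
    fix x :: 'a
    show "f x \<le> Liminf (at x) f"
      unfolding f_eq[of x]
    proof (rule SUP_least)
      fix w :: 'a assume "w \<in> UNIV"
      have "continuous_on UNIV (\<lambda>y. \<Phi> (y + w))"
        by (rule continuous_on_compose2[OF Phi_cont]) (auto intro: continuous_intros)
      hence "isCont (\<lambda>y. \<Phi> (y + w)) x" by (simp add: continuous_on_eq_continuous_at)
      hence "((\<lambda>y. \<Phi> (y + w) - r * q w) \<longlongrightarrow> \<Phi> (x + w) - r * q w) (at x)"
        by (intro tendsto_diff tendsto_const) (simp add: isCont_def)
      hence "((\<lambda>y. ereal (\<Phi> (y + w) - r * q w)) \<longlongrightarrow> ereal (\<Phi> (x + w) - r * q w)) (at x)"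
        by (rule tendsto_ereal)
      hence "Liminf (at x) (\<lambda>y. ereal (\<Phi> (y + w) - r * q w)) = ereal (\<Phi> (x + w) - r * q w)"
        by (intro lim_imp_Liminf) simp_all
      moreover have "Liminf (at x) (\<lambda>y. ereal (\<Phi> (y + w) - r * q w)) \<le> Liminf (at x) f"
        by (intro Liminf_mono always_eventually allI K1)
      ultimately show "ereal (\<Phi> (x + w) - r * q w) \<le> Liminf (at x) f" by simp
    qed
  qed
  have "f \<in> Gamma0" using proper convex lsc by (simp add: Gamma0_def)
  moreover have "moreau_env r1 g x + moreau_env r2 h x = moreau_env (r1 + r2) f x" for x
    using env[of x] unfolding r_def fin1 fin2 \<Phi>_def by simp
  ultimately show ?thesis by blast
qed
end
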